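(* There exists an integer $a_0$ such that for every integer $a\ge a_0$ and every positive integer $k\le\log a$ (natural logarithm), with positive probability the random graph $G_{a,k}$ satisfies both: (i) $G_{a,k}$ has a fractional $2$-guidance system with maximum outdegree at most $3$, and (ii) $G_{a,k}$ does not have a weak $2$-guidance system with maximum outdegree at most $k$.
   Context: For positive integers $a,k$, let $m=k2^{k+1}$. The random graph $G_{a,k}$ is obtained as follows: take disjoint sets $L$ of size $a$ and $R$ of size $ma$, and join each vertex of $L$ to each vertex of $R$ independently with probability $1/2$ (no other edges among $L\cup R$); partition $R$ arbitrarily into $m$ parts $R_1,\dots,R_m$ of size $a$, and for each $i$ add a new vertex $x_i$ adjacent exactly to all vertices of $R_i$. A partial orientation of $G$ is a directed graph $\vec{H}$ on $V(G)$ such that every $(u,v)\in E(\vec{H})$ satisfies $uv\in E(G)$. $B_{\vec{H}}(v,a)$ is the set of vertices reachable from $v$ by a directed path of length at most $a$. A weak $r$-guidance system of $G$ is a partial orientation $\vec{H}$ such that for any distinct $u,v$ at distance $\ell\le r$ in $G$ there exist non-negative integers $a,b$ with $a+b=\ell-1$ such that $G$ has an edge between $B_{\vec{H}}(u,a)$ and $B_{\vec{H}}(v,b)$. For $u,v$ at distance $\ell$, $\Gamma_G(u,v)$ is the set of neighbors of $u$ at distance $\ell-1$ from $v$. A fractional orientation is a function $p$ assigning a non-negative real $p(u,v)$ to each ordered pair of adjacent vertices; its maximum outdegree is $\max_u\sum_{v:uv\in E(G)}p(u,v)$. A fractional $r$-guidance system is a fractional orientation $p$ such that for all $u,v$ at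 distance $\ell$ with $2\le\ell\le r$, $\sum_{y\in\Gamma_G(u,v)}p(u,y)+\sum_{y\in\Gamma_G(v,u)}p(v,y)\ge1$. *)

theory Defs
  imports "HOL-Probability.Probability"
begin

inductive walk :: "('v \<Rightarrow> 'v \<Rightarrow> bool) \<Rightarrow> nat \<Rightarrow> 'v \<Rightarrow> 'v \<Rightarrow> bool"
  for adj where
  walk_nil: "walk adj 0 u u"
| walk_step: "adj u w \<Longrightarrow> walk adj n w v \<Longrightarrow> walk adj (Suc n) u v"

definition dist_is :: "('v \<Rightarrow> 'v \<Rightarrow> bool) \<Rightarrow> 'v \<Rightarrow> 'v \<Rightarrow> nat \<Rightarrow> bool" where
  "dist_is adj u v l \<longleftrightarrow> walk adj l u v \<and> (\<forall>n<l. \<not> walk adj n u v)"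

definition partial_orientation :: "'v set \<Rightarrow> ('v \<Rightarrow> 'v \<Rightarrow> bool) \<Rightarrow> ('v \<times> 'v) set \<Rightarrow> bool" where
  "partial_orientation V adj H \<longleftrightarrow> H \<subseteq> {(u,v). u \<in> V \<and> v \<in> V \<and> adj u v}"

definition max_outdeg_le :: "'v set \<Rightarrow> ('v \<times> 'v) set \<Rightarrow> nat \<Rightarrow> bool" where
  "max_outdeg_le V H k \<longleftrightarrow> (\<forall>u\<in>V. card {v. (u,v) \<in> H} \<le> k)"

definition ball_dir :: "('v \<times> 'v) set \<Rightarrow> 'v \<Rightarrow> nat \<Rightarrow> 'v set" where
  "ball_dir H v a = {w. \<exists>n\<le>a. walk (\<lambda>x y. (x,y) \<in> H) n v w}"

definition weak_guidance :: "'v set \<Rightarrow> ('v \<Rightarrow> 'v \<Rightarrow> bool) \<Rightarrow> nat \<Rightarrow> ('v \<times> 'v) set \<Rightarrow> bool" where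
  "weak_guidance V adj r H \<longleftrightarrow> partial_orientation V adj H \<and>
     (\<forall>u\<in>V. \<forall>v\<in>V. \<forall>l. u \<noteq> v \<and> dist_is adj u v l \<and> l \<le> r \<longrightarrow>
        (\<exists>a b. a + b = l - 1 \<and>
           (\<exists>x\<in>ball_dir H u a. \<exists>y\<in>ball_dir H v b. adj x y)))"

definition Gamma :: "'v set \<Rightarrow> ('v \<Rightarrow> 'v \<Rightarrow> bool) \<Rightarrow> 'v \<Rightarrow> 'v \<Rightarrow> nat \<Rightarrow> 'v set" where
  "Gamma V adj u v l = {y\<in>V. adj u y \<and> dist_is adj y v (l - 1)}"

definition frac_orientation :: "('v \<Rightarrow> 'v \<Rightarrow> bool) \<Rightarrow> ('v \<Rightarrow> 'v \<Rightarrow> real) \<Rightarrow> bool" where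
  "frac_orientation adj p \<longleftrightarrow> (\<forall>u v. adj u v \<longrightarrow> p u v \<ge> 0)"

definition frac_max_outdeg_le :: "'v set \<Rightarrow> ('v \<Rightarrow> 'v \<Rightarrow> bool) \<Rightarrow> ('v \<Rightarrow> 'v \<Rightarrow> real) \<Rightarrow> real \<Rightarrow> bool" where
  "frac_max_outdeg_le V adj p c \<longleftrightarrow> (\<forall>u\<in>V. (\<Sum>v\<in>{v\<in>V. adj u v}. p u v) \<le> c)"

definition frac_guidance :: "'v set \<Rightarrow> ('v \<Rightarrow> 'v \<Rightarrow> bool) \<Rightarrow> nat \<Rightarrow> ('v \<Rightarrow> 'v \<Rightarrow> real) \<Rightarrow> bool" where
  "frac_guidance V adj r p \<longleftrightarrow> frac_orientation adj p \<and>
     (\<forall>u\<in>V. \<forall>v\<in>V. \<forall>l. dist_is adj u v l \<and> 2 \<le> l \<and> l \<le> r \<longrightarrow>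
        (\<Sum>y\<in>Gamma V adj u v l. p u y) + (\<Sum>y\<in>Gamma V adj v u l. p v y) \<ge> 1)"

datatype vtx = Lv nat | Rv nat nat | Xv nat
  (* Rv i j : j-th vertex of part R_i;  Xv i : the vertex x_i *)

definition mval :: "nat \<Rightarrow> nat" where "mval k = k * 2 ^ (k + 1)"

definition Lset :: "nat \<Rightarrow> nat set" where "Lset a = {..<a}"
definition Rset :: "nat \<Rightarrow> nat \<Rightarrow> (nat \<times> nat) set" where
  "Rset a k = {..<mval k} \<times> {..<a}"

definition Gverts :: "nat \<Rightarrow> nat \<Rightarrow> vtx set" where
  "Gverts a k = Lv ` Lset a \<union> (\<lambda>(i,j). Rv i j) ` Rset a k \<union> Xv ` {..<mval k}"

text \<open>E is the (random) set of L--R edges, a subset of Lset a \<times> Rset a k\<close>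
fun Gadj :: "nat \<Rightarrow> nat \<Rightarrow> (nat \<times> (nat \<times> nat)) set \<Rightarrow> vtx \<Rightarrow> vtx \<Rightarrow> bool" where
  "Gadj a k E (Lv l) (Rv i j) = ((l, (i, j)) \<in> E \<and> l < a \<and> i < mval k \<and> j < a)"
| "Gadj a k E (Rv i j) (Lv l) = ((l, (i, j)) \<in> E \<and> l < a \<and> i < mval k \<and> j < a)"
| "Gadj a k E (Rv i j) (Xv q) = (i = q \<and> i < mval k \<and> j < a)"
| "Gadj a k E (Xv q) (Rv i j) = (i = q \<and> i < mval k \<and> j < a)"
| "Gadj a k E _ _ = False"

text \<open>Each L--R pair is an edge independently with probability 1/2, i.e. E is uniform
  over all subsets of Lset a \<times> Rset a k.\<close>
definition edge_dist :: "nat \<Rightarrow> nat \<Rightarrow> (nat \<times> (nat \<times> nat)) set pmf" where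
  "edge_dist a k = pmf_of_set (Pow (Lset a \<times> Rset a k))"

end

theory Submission
  imports Defs "HOL-Library.Nat_Bijection"
begin

lemma toggle_card:
  assumes "finite S" "\<And>x. x\<in>S \<Longrightarrow> f x \<in> S" "\<And>x. x\<in>S \<Longrightarrow> f (f x) = x"
    "\<And>x. x\<in>S \<Longrightarrow> Q (f x) \<longleftrightarrow> \<not> Q x"
  shows "2 * card {x\<in>S. Q x} = card S"
proof -
  have "bij_betw f {x\<in>S. Q x} {x\<in>S. \<not> Q x}"
    by (rule bij_betwI[where g=f]) (use assms in auto)
  hence "card {x\<in>S. Q x} = card {x\<in>S. \<not> Q x}" by (rule bij_betw_same_card)
  moreover have "card S = card {x\<in>S. Q x} + card {x\<in>S. \<not> Q x}"
  proof -
    have "S = {x\<in>S. Q x} \<union> {x\<in>S. \<not> Q x}" by auto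
    hence "card S = card ({x\<in>S. Q x} \<union> {x\<in>S. \<not> Q x})" by simp
    also have "\<dots> = card {x\<in>S. Q x} + card {x\<in>S. \<not> Q x}"
      by (rule card_Un_disjoint) (use assms(1) in auto)
    finally show ?thesis .
  qed
  ultimately show ?thesis by simp
qed

definition sd :: "nat set \<Rightarrow> nat set \<Rightarrow> nat set" where
  "sd A C = (A - C) \<union> (C - A)"

lemma card_sd_parity:
  assumes "finite X" "finite Y"
  shows "odd (card (sd X Y)) \<longleftrightarrow> (odd (card X) \<noteq> odd (card Y))"
proof -
  have "card (sd X Y) = card (X - Y) + card (Y - X)"
    unfolding sd_def by (rule card_Un_disjoint) (use assms in auto)
  moreover have "card (X - Y) = card X - card (X \<inter> Y)"
    using assms by (metis card_Diff_subset_Int finite_Int)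
  moreover have "card (Y - X) = card Y - card (X \<inter> Y)"
    using assms by (metis card_Diff_subset_Int finite_Int Int_commute)
  moreover have "card (X \<inter> Y) \<le> card X" "card (X \<inter> Y) \<le> card Y"
    using assms by (auto intro: card_mono)
  ultimately show ?thesis by auto
qed

lemma ip_sd:
  assumes "finite A" "finite C"
  shows "odd (card (sd A C \<inter> B)) \<longleftrightarrow> (odd (card (A \<inter> B)) \<noteq> odd (card (C \<inter> B)))"
proof -
  have "sd A C \<inter> B = sd (A \<inter> B) (C \<inter> B)" unfolding sd_def by auto
  thus ?thesis using card_sd_parity[of "A \<inter> B" "C \<inter> B"] assms by simp
qed

lemma sd_sd: "sd (sd A C) C = A" unfolding sd_def by auto

lemma sd_sub: "A \<subseteq> X \<Longrightarrow> C \<subseteq> X \<Longrightarrow> sd A C \<subseteq> X" unfolding sd_def by auto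

lemma card_single_odd:
  assumes "B \<subseteq> {..<D}" "c \<in> B"
  shows "2 * card {C\<in>Pow {..<D}. odd (card (C \<inter> B))} = 2 ^ D"
proof -
  have "2 * card {C\<in>Pow {..<D}. odd (card (C \<inter> B))} = card (Pow {..<D::nat})"
  proof (rule toggle_card[where f="\<lambda>C. sd C {c}"])
    fix x assume x: "x \<in> Pow {..<D}"
    show "sd x {c} \<in> Pow {..<D}" using x assms sd_sub[of x "{..<D}" "{c}"] by auto
    show "sd (sd x {c}) {c} = x" by (rule sd_sd)
    have "finite x" using x finite_subset by auto
    thus "odd (card (sd x {c} \<inter> B)) \<longleftrightarrow> \<not> odd (card (x \<inter> B))"
      using ip_sd[of x "{c}" B] assms by auto
  qed auto
  thus ?thesis by (simp add: card_Pow)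
qed

lemma card_pair_aux:
  assumes "A \<subseteq> {..<D}" "B \<subseteq> {..<D}" "a \<in> A" "c \<in> B" "c \<notin> A"
  shows "4 * card {C\<in>Pow {..<D}. odd (card (C \<inter> A)) \<and> odd (card (C \<inter> B))} = 2 ^ D"
proof -
  let ?S = "{C\<in>Pow {..<D}. odd (card (C \<inter> A))}"
  have "2 * card {C\<in>?S. odd (card (C \<inter> B))} = card ?S"
  proof (rule toggle_card[where f="\<lambda>C. sd C {c}"])
    fix x assume x: "x \<in> ?S"
    have fx: "finite x" using x finite_subset by auto
    show "sd x {c} \<in> ?S" using x assms ip_sd[of x "{c}" A] fx sd_sub[of x "{..<D}" "{c}"] by auto
    show "sd (sd x {c}) {c} = x" by (rule sd_sd)
    show "odd (card (sd x {c} \<inter> B)) \<longleftrightarrow> \<not> odd (card (x \<inter> B))"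
      using ip_sd[of x "{c}" B] assms fx by auto
  qed auto
  moreover have "{C\<in>?S. odd (card (C \<inter> B))} = {C\<in>Pow {..<D}. odd (card (C \<inter> A)) \<and> odd (card (C \<inter> B))}"
    by auto
  ultimately show ?thesis using card_single_odd[OF assms(1,3)] by simp
qed

lemma card_pair:
  assumes "A \<subseteq> {..<D}" "B \<subseteq> {..<D}" "A \<noteq> {}" "B \<noteq> {}"
  shows "2 ^ D \<le> 4 * card {C\<in>Pow {..<D}. odd (card (C \<inter> A)) \<and> odd (card (C \<inter> B))}"
proof (cases "A = B")
  case True
  obtain a where "a \<in> A" using assms by auto
  thus ?thesis using True card_single_odd[OF assms(1), of a] by simp
next
  case False
  obtain a where a: "a \<in> A" using assms by auto
  obtain b where b: "b \<in> B" using assms by auto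
  show ?thesis
  proof (cases "B \<subseteq> A")
    case False
    then obtain c where "c \<in> B" "c \<notin> A" by auto
    thus ?thesis using card_pair_aux[OF assms(1,2) a] by simp
  next
    case True
    with \<open>A \<noteq> B\<close> obtain c where c: "c \<in> A" "c \<notin> B" by auto
    have "{C\<in>Pow {..<D}. odd (card (C \<inter> A)) \<and> odd (card (C \<inter> B))} =
          {C\<in>Pow {..<D}. odd (card (C \<inter> B)) \<and> odd (card (C \<inter> A))}" by auto
    thus ?thesis using card_pair_aux[OF assms(2,1) b c] by simp
  qed
qed

lemma halving:
  assumes "finite T" "T \<subseteq> Pow {..<D}"
  shows "2 ^ D \<le> 2 ^ card T * card {C\<in>Pow {..<D}. \<forall>B\<in>T. even (card (C \<inter> B))}"
  using assms
proof (induction T rule: finite_induct)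
  case empty
  have "{C\<in>Pow {..<D::nat}. \<forall>B\<in>{}. even (card (C \<inter> B))} = Pow {..<D}" by auto
  thus ?case by (simp add: card_Pow)
next
  case (insert B T)
  let ?U = "{C\<in>Pow {..<D}. \<forall>B\<in>T. even (card (C \<inter> B))}"
  let ?U' = "{C\<in>Pow {..<D}. \<forall>B'\<in>insert B T. even (card (C \<inter> B'))}"
  have IH: "2 ^ D \<le> 2 ^ card T * card ?U" using insert by auto
  have "card ?U \<le> 2 * card ?U'"
  proof (cases "\<exists>C0\<in>?U. odd (card (C0 \<inter> B))")
    case True
    then obtain C0 where C0: "C0 \<in> ?U" "odd (card (C0 \<inter> B))" by blast
    have fC0: "finite C0" using C0 finite_subset by auto
    have "2 * card {C\<in>?U. even (card (C \<inter> B))} = card ?U"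
    proof (rule toggle_card[where f="\<lambda>C. sd C C0"])
      fix x assume x: "x \<in> ?U"
      have fx: "finite x" using x finite_subset by auto
      have "\<forall>B'\<in>T. even (card (sd x C0 \<inter> B'))"
    proof
      fix B' assume "B' \<in> T"
      thus "even (card (sd x C0 \<inter> B'))" using x C0 fx fC0 ip_sd[of x C0 B'] by auto
    qed
    thus "sd x C0 \<in> ?U" using x C0 sd_sub[of x "{..<D}" C0] by auto
      show "sd (sd x C0) C0 = x" by (rule sd_sd)
      show "even (card (sd x C0 \<inter> B)) \<longleftrightarrow> \<not> even (card (x \<inter> B))"
        using ip_sd[of x C0 B] C0 fx fC0 by auto
    qed auto
    moreover have "{C\<in>?U. even (card (C \<inter> B))} = ?U'" by auto
    ultimately show ?thesis by simp
  next
    case False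
    hence "?U' = ?U" by auto
    thus ?thesis by simp
  qed
  hence "2 ^ card T * card ?U \<le> 2 ^ card T * (2 * card ?U')" by simp
  hence h: "2 ^ D \<le> 2 ^ card T * (2 * card ?U')" using IH by linarith
  have "2 ^ card (insert B T) * card ?U' = 2 ^ card T * (2 * card ?U')" using insert by simp
  thus ?case using h by linarith
qed

lemma set_encode_bound:
  assumes "A \<subseteq> {..<D}" shows "set_encode A < 2 ^ D"
proof -
  have "set_encode A = (\<Sum>x\<in>A. 2 ^ x)" by (simp add: set_encode_def)
  also have "\<dots> \<le> (\<Sum>x<D. 2 ^ x)" using assms by (intro sum_mono2) auto
  also have "\<dots> < 2 ^ D" by (induction D) auto
  finally show ?thesis .
qed

lemma set_decode_bound:
  assumes "n < 2 ^ D" shows "set_decode n \<subseteq> {..<D}"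
proof
  fix x assume x: "x \<in> set_decode n"
  have "(2::nat) ^ x \<le> set_encode (set_decode n)"
    unfolding set_encode_def using x by (intro member_le_sum) auto
  hence "(2::nat) ^ x \<le> n" by simp
  hence "(2::nat) ^ x < 2 ^ D" using assms by linarith
  thus "x \<in> {..<D}" using nat_power_less_imp_less[of 2 x D] by simp
qed

lemma card_dec:
  "card {j. j < 2 ^ D \<and> Q (set_decode j)} = card {C\<in>Pow {..<D}. Q C}"
proof -
  have "{C\<in>Pow {..<D}. Q C} = set_decode ` {j. j < 2 ^ D \<and> Q (set_decode j)}"
  proof
    show "set_decode ` {j. j < 2 ^ D \<and> Q (set_decode j)} \<subseteq> {C\<in>Pow {..<D}. Q C}"
      using set_decode_bound by auto
    show "{C\<in>Pow {..<D}. Q C} \<subseteq> set_decode ` {j. j < 2 ^ D \<and> Q (set_decode j)}"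
    proof
      fix C assume C: "C \<in> {C\<in>Pow {..<D}. Q C}"
      hence fC: "finite C" using finite_subset by auto
      show "C \<in> set_decode ` {j. j < 2 ^ D \<and> Q (set_decode j)}"
        using C fC set_encode_bound[of C D]
        by (intro image_eqI[where x="set_encode C"]) auto
    qed
  qed
  moreover have "inj_on set_decode {j. j < 2 ^ D \<and> Q (set_decode j)}"
    by (metis inj_onI set_decode_inverse)
  ultimately show ?thesis by (simp add: card_image)
qed

definition NN :: "nat \<Rightarrow> nat" where "NN k = 2 ^ (k + 1)"

definition E0 :: "nat \<Rightarrow> (nat \<times> (nat \<times> nat)) set" where
  "E0 k = {(l,(i,j)). l < NN k \<and> i < mval k \<and> j < NN k \<and> odd (card (set_decode l \<inter> set_decode j))}"

lemma adj_LR: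
  assumes "NN k \<le> a"
  shows "Gadj a k (E0 k) (Lv l) (Rv i j) \<longleftrightarrow> l < NN k \<and> i < mval k \<and> j < NN k \<and> odd (card (set_decode l \<inter> set_decode j))"
    "Gadj a k (E0 k) (Rv i j) (Lv l) \<longleftrightarrow> l < NN k \<and> i < mval k \<and> j < NN k \<and> odd (card (set_decode l \<inter> set_decode j))"
  using assms by (auto simp: E0_def)

lemma adj_irrefl: "\<not> Gadj a k E u u"
  by (cases u) auto

lemma walk0: "walk adj 0 u v \<longleftrightarrow> u = v"
  by (auto elim: walk.cases intro: walk.intros)

lemma walkSuc: "walk adj (Suc n) u v \<longleftrightarrow> (\<exists>w. adj u w \<and> walk adj n w v)"
  by (auto elim: walk.cases intro: walk.intros)

lemma walk1: "walk adj (Suc 0) u v \<longleftrightarrow> adj u v"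
  by (simp add: walkSuc walk0)

lemma walk2: "walk adj 2 u v \<longleftrightarrow> (\<exists>w. adj u w \<and> adj w v)"
  by (simp add: numeral_2_eq_2 walkSuc walk0)

lemma Gverts_simps [simp]:
  "Lv l \<in> Gverts a k \<longleftrightarrow> l < a"
  "Rv i j \<in> Gverts a k \<longleftrightarrow> i < mval k \<and> j < a"
  "Xv i \<in> Gverts a k \<longleftrightarrow> i < mval k"
  by (auto simp: Gverts_def Lset_def Rset_def)

lemma finite_Gverts: "finite (Gverts a k)"
  by (simp add: Gverts_def Lset_def Rset_def)

lemma Gamma2:
  "Gamma V (Gadj a k E) u v 2 = {y\<in>V. Gadj a k E u y \<and> Gadj a k E y v}"
  unfolding Gamma_def dist_is_def
  using adj_irrefl[of a k E]
  by (auto simp: walk1 walk0 less_Suc_eq)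

fun pw :: "nat \<Rightarrow> vtx \<Rightarrow> vtx \<Rightarrow> real" where
  "pw N (Xv i) (Rv i' j) = (if j < N then 2 / real N else 0)"
| "pw N (Lv l) (Rv i j) = (if i = 0 then 2 / real N else 0)"
| "pw N (Rv i j) (Xv q) = 1"
| "pw N (Rv i j) (Lv l) = 2 / real N"
| "pw N _ _ = 0"

lemma pw_nonneg: "0 \<le> pw N u v"
  by (cases "(N,u,v)" rule: pw.cases) auto

lemma sum_le_via:
  assumes "finite A" "finite B" "\<forall>v\<in>A-B. f v = 0" "\<forall>v\<in>B. 0 \<le> f v"
  shows "sum f A \<le> (sum f B :: real)"
proof -
  have "sum f A = sum f (A \<inter> B) + sum f (A - B)"
    using assms(1) by (metis sum.Int_Diff)
  also have "sum f (A - B) = 0" using assms(3) by simp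
  also have "sum f (A \<inter> B) \<le> sum f B"
    using assms by (intro sum_mono2) auto
  finally show ?thesis by simp
qed

lemma sum_img_const:
  assumes "inj f" "\<forall>x\<in>J. g (f x) = c" "finite J"
  shows "sum g (f ` J) = real (card J) * c"
proof -
  have "sum g (f ` J) = sum (g \<circ> f) J" using assms by (simp add: sum.reindex inj_on_subset)
  also have "\<dots> = sum (\<lambda>_. c) J" using assms by (intro sum.cong) auto
  finally show ?thesis by simp
qed

lemma outdeg:
  assumes "NN k \<le> a" "u \<in> Gverts a k"
  shows "(\<Sum>v\<in>{v\<in>Gverts a k. Gadj a k (E0 k) u v}. pw (NN k) u v) \<le> 3"
proof -
  let ?A = "{v\<in>Gverts a k. Gadj a k (E0 k) u v}"
  have fA: "finite ?A" using finite_Gverts by simp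
  have N0: "real (NN k) > 0" by (simp add: NN_def)
  show ?thesis
  proof (cases u)
    case (Xv i)
    let ?B = "Rv i ` {..<NN k}"
    have "sum (pw (NN k) u) ?A \<le> sum (pw (NN k) u) ?B"
    proof (rule sum_le_via)
      show "\<forall>v\<in>?A - ?B. pw (NN k) u v = 0"
      proof
        fix v assume v: "v \<in> ?A - ?B"
        show "pw (NN k) u v = 0"
          using v Xv by (cases v) auto
      qed
    qed (use fA pw_nonneg in auto)
    also have "\<dots> = real (card {..<NN k}) * (2 / real (NN k))"
      by (rule sum_img_const) (auto simp: Xv inj_def)
    also have "\<dots> = 2" using N0 by simp
    finally show ?thesis by simp
  next
    case (Lv l)
    let ?B = "Rv 0 ` {..<NN k}"
    have "sum (pw (NN k) u) ?A \<le> sum (pw (NN k) u) ?B"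
    proof (rule sum_le_via)
      show "\<forall>v\<in>?A - ?B. pw (NN k) u v = 0"
      proof
        fix v assume v: "v \<in> ?A - ?B"
        show "pw (NN k) u v = 0"
          using v Lv assms(1) by (cases v) (auto simp: E0_def)
      qed
    qed (use fA pw_nonneg in auto)
    also have "\<dots> = real (card {..<NN k}) * (2 / real (NN k))"
      by (rule sum_img_const) (auto simp: Lv inj_def)
    also have "\<dots> = 2" using N0 by simp
    finally show ?thesis by simp
  next
    case (Rv i j)
    let ?B = "insert (Xv i) (Lv ` {..<NN k})"
    have "sum (pw (NN k) u) ?A \<le> sum (pw (NN k) u) ?B"
    proof (rule sum_le_via)
      show "\<forall>v\<in>?A - ?B. pw (NN k) u v = 0"
      proof
        fix v assume v: "v \<in> ?A - ?B"
        show "pw (NN k) u v = 0"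
          using v Rv assms(1) by (cases v) (auto simp: E0_def)
      qed
    qed (use fA pw_nonneg in auto)
    also have "\<dots> = 1 + sum (pw (NN k) u) (Lv ` {..<NN k})"
      by (subst sum.insert) (auto simp: Rv)
    also have "sum (pw (NN k) u) (Lv ` {..<NN k}) = real (card {..<NN k}) * (2 / real (NN k))"
      by (rule sum_img_const) (auto simp: Rv inj_def)
    also have "\<dots> = 2" using N0 by simp
    finally show ?thesis by simp
  qed
qed

lemma NN_pos: "0 < NN k" by (simp add: NN_def)

lemma dec_ne: "odd (card (A \<inter> B)) \<Longrightarrow> A \<noteq> {} \<and> B \<noteq> {}"
  by auto

lemma dec_sub: "j < NN k \<Longrightarrow> set_decode j \<subseteq> {..<k+1}"
  unfolding NN_def by (rule set_decode_bound)

definition GG :: "nat \<Rightarrow> nat \<Rightarrow> vtx \<Rightarrow> vtx \<Rightarrow> vtx set" where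
  "GG a k u v = {y\<in>Gverts a k. Gadj a k (E0 k) u y \<and> Gadj a k (E0 k) y v}"

lemma finite_GG: "finite (GG a k u v)"
  unfolding GG_def using finite_Gverts by simp

lemma sum_GG_ge:
  assumes "S \<subseteq> GG a k u v"
  shows "sum (pw N u) S \<le> sum (pw N u) (GG a k u v)"
  by (rule sum_mono2) (use assms finite_GG pw_nonneg in auto)

lemma LX:
  assumes "NN k \<le> a" "i < mval k" "l < NN k" "set_decode l \<noteq> {}"
  shows "1 \<le> sum (pw (NN k) (Xv i)) (GG a k (Xv i) (Lv l))"
proof -
  let ?J = "{j. j < 2 ^ (k+1) \<and> odd (card (set_decode j \<inter> set_decode l))}"
  have sub: "Rv i ` ?J \<subseteq> GG a k (Xv i) (Lv l)"
    using assms by (auto simp: GG_def E0_def NN_def Int_commute)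
  obtain c where c: "c \<in> set_decode l" using assms by auto
  have "card ?J = card {C\<in>Pow {..<k+1}. odd (card (C \<inter> set_decode l))}"
    by (rule card_dec)
  hence cJ: "2 * card ?J = 2 ^ (k+1)"
    using card_single_odd[OF dec_sub[OF assms(3)] c] by simp
  have "sum (pw (NN k) (Xv i)) (Rv i ` ?J) = real (card ?J) * (2 / real (NN k))"
    by (rule sum_img_const) (auto simp: inj_def NN_def)
  also have "\<dots> = 1" using cJ NN_pos[of k] unfolding NN_def
    by (simp add: field_simps)
  finally show ?thesis using sum_GG_ge[OF sub, of "NN k"] by linarith
qed

lemma LL:
  assumes "NN k \<le> a" "0 < k" "l < NN k" "set_decode l \<noteq> {}" "l' < NN k" "set_decode l' \<noteq> {}"
  shows "1/2 \<le> sum (pw (NN k) (Lv l)) (GG a k (Lv l) (Lv l'))"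
proof -
  let ?J = "{j. j < 2 ^ (k+1) \<and> (odd (card (set_decode j \<inter> set_decode l)) \<and> odd (card (set_decode j \<inter> set_decode l')))}"
  have m0: "0 < mval k" using assms(2) by (simp add: mval_def)
  have sub: "Rv 0 ` ?J \<subseteq> GG a k (Lv l) (Lv l')"
    using assms m0 by (auto simp: GG_def E0_def NN_def Int_commute)
  have "card ?J = card {C\<in>Pow {..<k+1}. odd (card (C \<inter> set_decode l)) \<and> odd (card (C \<inter> set_decode l'))}"
    by (rule card_dec)
  hence cJ: "2 ^ (k+1) \<le> 4 * card ?J"
    using card_pair[OF dec_sub[OF assms(3)] dec_sub[OF assms(5)] assms(4,6)] by simp
  have "sum (pw (NN k) (Lv l)) (Rv 0 ` ?J) = real (card ?J) * (2 / real (NN k))"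
    by (rule sum_img_const) (auto simp: inj_def NN_def)
  also have "\<dots> \<ge> 1/2"
  proof -
    have "real (2 ^ (k+1)) \<le> real (4 * card ?J)" using cJ by linarith
    thus ?thesis using NN_pos[of k] unfolding NN_def by (simp add: field_simps)
  qed
  finally show ?thesis using sum_GG_ge[OF sub, of "NN k"] by linarith
qed

lemma RR:
  assumes "NN k \<le> a" "j < NN k" "set_decode j \<noteq> {}" "j' < NN k" "set_decode j' \<noteq> {}"
    "i < mval k" "i' < mval k"
  shows "1/2 \<le> sum (pw (NN k) (Rv i j)) (GG a k (Rv i j) (Rv i' j'))"
proof -
  let ?J = "{l. l < 2 ^ (k+1) \<and> (odd (card (set_decode l \<inter> set_decode j)) \<and> odd (card (set_decode l \<inter> set_decode j')))}"
  have sub: "Lv ` ?J \<subseteq> GG a k (Rv i j) (Rv i' j')"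
    using assms by (auto simp: GG_def E0_def NN_def)
  have "card ?J = card {C\<in>Pow {..<k+1}. odd (card (C \<inter> set_decode j)) \<and> odd (card (C \<inter> set_decode j'))}"
    by (rule card_dec)
  hence cJ: "2 ^ (k+1) \<le> 4 * card ?J"
    using card_pair[OF dec_sub[OF assms(2)] dec_sub[OF assms(4)] assms(3,5)] by simp
  have "sum (pw (NN k) (Rv i j)) (Lv ` ?J) = real (card ?J) * (2 / real (NN k))"
    by (rule sum_img_const) (auto simp: inj_def NN_def)
  also have "\<dots> \<ge> 1/2"
  proof -
    have "real (2 ^ (k+1)) \<le> real (4 * card ?J)" using cJ by linarith
    thus ?thesis using NN_pos[of k] unfolding NN_def by (simp add: field_simps)
  qed
  finally show ?thesis using sum_GG_ge[OF sub, of "NN k"] by linarith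
qed

lemma RRsame:
  assumes "i < mval k" "j < a" "j' < a"
  shows "1 \<le> sum (pw N (Rv i j)) (GG a k (Rv i j) (Rv i j'))"
proof -
  have sub: "{Xv i} \<subseteq> GG a k (Rv i j) (Rv i j')"
    using assms by (auto simp: GG_def)
  show ?thesis using sum_GG_ge[OF sub] by simp
qed

lemma S_nonneg: "0 \<le> sum (pw N u) S"
  by (rule sum_nonneg) (simp add: pw_nonneg)

lemma key:
  assumes "NN k \<le> a" "0 < k" "u \<in> Gverts a k" "v \<in> Gverts a k" "u \<noteq> v"
    "Gadj a k (E0 k) u w" "Gadj a k (E0 k) w v"
  shows "1 \<le> sum (pw (NN k) u) (GG a k u v) + sum (pw (NN k) v) (GG a k v u)"
proof (cases u)
  case (Xv i)
  then obtain j where w: "w = Rv i j" "i < mval k" using assms(6) by (cases w) auto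
  then obtain l where v: "v = Lv l" using assms(5,7) Xv by (cases v) auto
  have h: "l < NN k" "odd (card (set_decode l \<inter> set_decode j))"
    using assms(7) w v adj_LR[OF assms(1)] by auto
  hence "set_decode l \<noteq> {}" by auto
  thus ?thesis using LX[OF assms(1) w(2) h(1)] Xv v S_nonneg[of "NN k" v "GG a k v u"] by simp
next
  case (Lv l)
  then obtain i j where w: "w = Rv i j" using assms(6) by (cases w) auto
  have h: "l < NN k" "odd (card (set_decode l \<inter> set_decode j))" "i < mval k"
    using assms(6) w Lv adj_LR[OF assms(1)] by auto
  show ?thesis
  proof (cases v)
    case (Xv q)
    have "q = i" using assms(7) w Xv by auto
    have "set_decode l \<noteq> {}" using h by auto
    thus ?thesis using LX[OF assms(1) h(3) h(1)] \<open>q = i\<close> Lv Xv S_nonneg[of "NN k" u "GG a k u v"] by auto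
  next
    case (Lv l')
    have h': "l' < NN k" "odd (card (set_decode l' \<inter> set_decode j))"
      using assms(7) w Lv adj_LR[OF assms(1)] by auto
    have ne: "set_decode l \<noteq> {}" "set_decode l' \<noteq> {}" using h h' by auto
    show ?thesis using LL[OF assms(1,2) h(1) ne(1) h'(1) ne(2)] LL[OF assms(1,2) h'(1) ne(2) h(1) ne(1)] Lv \<open>u = Lv l\<close>
      by simp
  next
    case (Rv i' j')
    thus ?thesis using assms(7) w by auto
  qed
next
  case (Rv i j)
  show ?thesis
  proof (cases w)
    case (Lv l)
    have h: "l < NN k" "odd (card (set_decode l \<inter> set_decode j))" "i < mval k" "j < NN k"
      using assms(6) Rv Lv adj_LR[OF assms(1)] by auto
    obtain i' j' where v: "v = Rv i' j'" using assms(7) Lv by (cases v) auto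
    have h': "odd (card (set_decode l \<inter> set_decode j'))" "i' < mval k" "j' < NN k"
      using assms(7) v Lv adj_LR[OF assms(1)] by auto
    have ne: "set_decode j \<noteq> {}" "set_decode j' \<noteq> {}" using h h' by auto
    show ?thesis using RR[OF assms(1) h(4) ne(1) h'(3) ne(2) h(3) h'(2)]
        RR[OF assms(1) h'(3) ne(2) h(4) ne(1) h'(2) h(3)] Rv v by simp
  next
    case (Xv q)
    obtain j' where v: "v = Rv i j'" "j' < a" using assms(7) assms(6) Xv Rv by (cases v) auto
    have "i < mval k" "j < a" using assms(3) Rv by auto
    thus ?thesis using RRsame[of i k j a j' "NN k"] v Rv S_nonneg[of "NN k" v "GG a k v u"] by auto
  next
    case (Rv i' j')
    thus ?thesis using assms(6) \<open>u = Rv i j\<close> by auto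
  qed
qed

lemma ball0: "ball_dir H v 0 = {v}"
  unfolding ball_dir_def by (auto simp: walk0)

lemma ball1: "ball_dir H v (Suc 0) = insert v {w. (v,w) \<in> H}"
  unfolding ball_dir_def by (auto simp: walk0 walk1 le_Suc_eq)

lemma part_i:
  assumes "NN k \<le> a" "0 < k"
  shows "frac_guidance (Gverts a k) (Gadj a k (E0 k)) 2 (pw (NN k))
       \<and> frac_max_outdeg_le (Gverts a k) (Gadj a k (E0 k)) (pw (NN k)) 3"
proof
  show "frac_max_outdeg_le (Gverts a k) (Gadj a k (E0 k)) (pw (NN k)) 3"
    unfolding frac_max_outdeg_le_def using outdeg[OF assms(1)] by blast
  show "frac_guidance (Gverts a k) (Gadj a k (E0 k)) 2 (pw (NN k))"
    unfolding frac_guidance_def frac_orientation_def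
  proof (intro conjI allI impI ballI)
    fix u v l assume u: "u \<in> Gverts a k" and v: "v \<in> Gverts a k"
      and h: "dist_is (Gadj a k (E0 k)) u v l \<and> 2 \<le> l \<and> l \<le> 2"
    hence l: "l = 2" by simp
    have w: "walk (Gadj a k (E0 k)) 2 u v" and uv: "u \<noteq> v"
      using h l unfolding dist_is_def by (auto simp: walk0 dest: spec[of _ 0])
    then obtain w where "Gadj a k (E0 k) u w" "Gadj a k (E0 k) w v" by (auto simp: walk2)
    from key[OF assms u v uv this]
    show "1 \<le> (\<Sum>y\<in>Gamma (Gverts a k) (Gadj a k (E0 k)) u v l. pw (NN k) u y) +
             (\<Sum>y\<in>Gamma (Gverts a k) (Gadj a k (E0 k)) v u l. pw (NN k) v y)"
      using l by (simp add: Gamma2 GG_def)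
  qed (simp add: pw_nonneg)
qed

lemma exists_l:
  assumes "NN k \<le> a" "0 < k" "i < mval k"
    and wg: "weak_guidance (Gverts a k) (Gadj a k (E0 k)) 2 H"
    and od: "max_outdeg_le (Gverts a k) H k"
  shows "\<exists>l j. 0 < l \<and> l < NN k \<and> (Lv l, Rv i j) \<in> H"
proof -
  let ?V = "Gverts a k" and ?adj = "Gadj a k (E0 k)"
  have po: "\<And>x y. (x,y) \<in> H \<Longrightarrow> x \<in> ?V \<and> y \<in> ?V \<and> ?adj x y"
  proof -
    have "partial_orientation (Gverts a k) (Gadj a k (E0 k)) H"
      using wg unfolding weak_guidance_def by blast
    thus "\<And>x y. (x,y) \<in> H \<Longrightarrow> x \<in> ?V \<and> y \<in> ?V \<and> ?adj x y" unfolding partial_orientation_def by blast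
  qed
  let ?S = "{y. (Xv i, y) \<in> H}"
  have XV: "Xv i \<in> ?V" using assms(3) by simp
  have cS: "card ?S \<le> k" using od XV unfolding max_outdeg_le_def by blast
  have "?S \<subseteq> ?V" using po by blast
  hence fS: "finite ?S" using finite_Gverts finite_subset by blast
  let ?J = "{j. j < NN k \<and> Rv i j \<in> ?S}"
  let ?T = "set_decode ` ?J"
  have fJ: "finite ?J" by (rule finite_subset[of _ "{..<NN k}"]) auto
  have "card ?T \<le> card ?J" using fJ by (rule card_image_le)
  also have "card ?J \<le> card ?S"
    by (rule card_inj_on_le[of "Rv i"]) (use fS in \<open>auto simp: inj_on_def\<close>)
  finally have cT: "card ?T \<le> k" using cS by linarith
  have Tsub: "?T \<subseteq> Pow {..<k+1}" using dec_sub by auto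
  let ?U = "{C\<in>Pow {..<k+1}. \<forall>B\<in>?T. even (card (C \<inter> B))}"
  have hv: "2 ^ (k+1) \<le> 2 ^ card ?T * card ?U"
    using halving[OF finite_imageI[OF fJ] Tsub] .
  have "2 ^ card ?T * card ?U \<le> 2 ^ k * card ?U"
    using cT by (intro mult_right_mono power_increasing) auto
  with hv have "2 ^ (k+1) \<le> 2 ^ k * card ?U" by (rule le_trans)
  hence "2 ^ k * 2 \<le> 2 ^ k * card ?U" by (simp add: power_add)
  moreover have "0 < (2::nat) ^ k" by simp
  ultimately have cU: "2 \<le> card ?U" using mult_le_cancel1[of "2^k" 2 "card ?U"] by blast
  obtain C where C: "C \<in> ?U" "C \<noteq> {}"
  proof (rule ccontr)
    assume "\<not> thesis"
    hence "?U \<subseteq> {{}}" using that by blast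
    hence "card ?U \<le> card {{}::nat set}" by (intro card_mono) auto
    thus False using cU by simp
  qed
  have fC: "finite C" using C finite_subset by auto
  define l where "l = set_encode C"
  have dl: "set_decode l = C" using fC by (simp add: l_def)
  have lN: "l < NN k" unfolding l_def NN_def using C by (intro set_encode_bound) auto
  have l0: "0 < l" using C dl by (cases "l = 0") auto
  obtain c where c: "c \<in> C" using C by auto
  define j0 where "j0 = set_encode {c}"
  have dj0: "set_decode j0 = {c}" unfolding j0_def by (metis finite.emptyI finite.insertI set_encode_inverse)
  have j0N: "j0 < NN k" unfolding j0_def NN_def using C c by (intro set_encode_bound) auto
  have a1: "?adj (Xv i) (Rv i j0)" using j0N assms by simp
  have a2: "?adj (Rv i j0) (Lv l)" using j0N lN assms c dl dj0 by (simp add: E0_def)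
  have "walk ?adj 2 (Xv i) (Lv l)" unfolding walk2 using a1 a2 by blast
  moreover have "\<forall>n<2. \<not> walk ?adj n (Xv i) (Lv l)"
  proof (intro allI impI)
    fix n :: nat assume "n < 2"
    hence "n = 0 \<or> n = Suc 0" by auto
    thus "\<not> walk ?adj n (Xv i) (Lv l)" by (auto simp only: walk0 walk1 Gadj.simps vtx.distinct)
  qed
  ultimately have dist: "dist_is ?adj (Xv i) (Lv l) 2" unfolding dist_is_def by blast
  have inV: "Xv i \<in> ?V" "Lv l \<in> ?V" using assms lN by auto
  obtain a' b' where ab: "a' + b' = 1" and
    ex: "\<exists>x\<in>ball_dir H (Xv i) a'. \<exists>y\<in>ball_dir H (Lv l) b'. ?adj x y"
  proof -
    have "\<forall>u\<in>?V. \<forall>v\<in>?V. \<forall>l. u \<noteq> v \<and> dist_is ?adj u v l \<and> l \<le> 2 \<longrightarrow>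
        (\<exists>a b. a + b = l - 1 \<and> (\<exists>x\<in>ball_dir H u a. \<exists>y\<in>ball_dir H v b. ?adj x y))"
      using wg unfolding weak_guidance_def by blast
    hence "\<exists>a b. a + b = 2 - 1 \<and> (\<exists>x\<in>ball_dir H (Xv i) a. \<exists>y\<in>ball_dir H (Lv l) b. ?adj x y)"
      using inV dist by blast
    thus ?thesis using that by auto
  qed
  show ?thesis
  proof (cases "a' = 0")
    case True
    hence "b' = Suc 0" using ab by simp
    then obtain y where y: "y \<in> insert (Lv l) {w. (Lv l, w) \<in> H}" "?adj (Xv i) y"
      using ex True by (auto simp: ball0 ball1)
    then obtain j' where "y = Rv i j'" by (cases y) auto
    thus ?thesis using y l0 lN by auto
  next
    case False
    hence "a' = Suc 0" "b' = 0" using ab by auto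
    then obtain x where x: "x \<in> insert (Xv i) ?S" "?adj x (Lv l)"
      using ex by (auto simp: ball0 ball1)
    have "x \<noteq> Xv i" using x by auto
    hence xS: "x \<in> ?S" using x by auto
    hence "?adj (Xv i) x" using po by auto
    then obtain j' where xj: "x = Rv i j'" by (cases x) auto
    have j': "j' < NN k" "odd (card (C \<inter> set_decode j'))"
      using x xj dl assms by (auto simp: E0_def)
    hence "j' \<in> ?J" using xS xj by auto
    hence "set_decode j' \<in> ?T" by auto
    hence "even (card (C \<inter> set_decode j'))" using C by auto
    thus ?thesis using j' by simp
  qed
qed

lemma part_ii:
  assumes "NN k \<le> a" "0 < k"
  shows "\<not> (\<exists>H. weak_guidance (Gverts a k) (Gadj a k (E0 k)) 2 H \<and> max_outdeg_le (Gverts a k) H k)"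
proof
  assume "\<exists>H. weak_guidance (Gverts a k) (Gadj a k (E0 k)) 2 H \<and> max_outdeg_le (Gverts a k) H k"
  then obtain H where wg: "weak_guidance (Gverts a k) (Gadj a k (E0 k)) 2 H"
    and od: "max_outdeg_le (Gverts a k) H k" by blast
  have "\<forall>i\<in>{..<mval k}. \<exists>p. 0 < fst p \<and> fst p < NN k \<and> (Lv (fst p), Rv i (snd p)) \<in> H"
  proof
    fix i assume "i \<in> {..<mval k}"
    hence "i < mval k" by simp
    from exists_l[OF assms this wg od] obtain l j where "0 < l \<and> l < NN k \<and> (Lv l, Rv i j) \<in> H"
      by blast
    thus "\<exists>p. 0 < fst p \<and> fst p < NN k \<and> (Lv (fst p), Rv i (snd p)) \<in> H"
      by (intro exI[of _ "(l,j)"]) simp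
  qed
  from bchoice[OF this] obtain F where F: "\<forall>i\<in>{..<mval k}. 0 < fst (F i) \<and> fst (F i) < NN k \<and> (Lv (fst (F i)), Rv i (snd (F i))) \<in> H"
    by blast
  define phi where "phi i = (Lv (fst (F i)), Rv i (snd (F i)))" for i
  define W where "W = (\<Union>l\<in>{1..<NN k}. Pair (Lv l) ` {y. (Lv l, y) \<in> H})"
  have fin: "finite {y. (Lv l, y) \<in> H}" for l
  proof -
    have "partial_orientation (Gverts a k) (Gadj a k (E0 k)) H"
      using wg unfolding weak_guidance_def by blast
    hence "H \<subseteq> Gverts a k \<times> Gverts a k" unfolding partial_orientation_def by blast
    hence "{y. (Lv l, y) \<in> H} \<subseteq> Gverts a k" by auto
    thus ?thesis using finite_Gverts finite_subset by blast
  qed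
  have fW: "finite W" unfolding W_def by (intro finite_UN_I finite_atLeastLessThan finite_imageI fin)
  have sub: "phi ` {..<mval k} \<subseteq> W"
  proof
    fix z assume "z \<in> phi ` {..<mval k}"
    then obtain i where i: "i < mval k" "z = phi i" by auto
    have iin: "i \<in> {..<mval k}" using i(1) by simp
    have Fi: "0 < fst (F i) \<and> fst (F i) < NN k \<and> (Lv (fst (F i)), Rv i (snd (F i))) \<in> H" by (rule bspec[OF F iin])
    hence l1: "fst (F i) \<in> {1..<NN k}" and l2: "Rv i (snd (F i)) \<in> {y. (Lv (fst (F i)), y) \<in> H}" by auto
    have "z \<in> Pair (Lv (fst (F i))) ` {y. (Lv (fst (F i)), y) \<in> H}"
      unfolding i(2) phi_def by (rule imageI[OF l2])
    thus "z \<in> W" unfolding W_def by (rule UN_I[OF l1])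
  qed
  have inj: "inj_on phi {..<mval k}"
  proof (rule inj_onI)
    fix x y assume "phi x = phi y"
    thus "x = y" unfolding phi_def by simp
  qed
  have "mval k = card (phi ` {..<mval k})" using inj by (simp add: card_image)
  also have "\<dots> \<le> card W" using fW sub by (rule card_mono)
  also have "\<dots> \<le> (\<Sum>l\<in>{1..<NN k}. card (Pair (Lv l) ` {y. (Lv l, y) \<in> H}))"
    unfolding W_def by (rule card_UN_le) simp
  also have "\<dots> \<le> (\<Sum>l\<in>{1..<NN k}. k)"
  proof (rule sum_mono)
    fix l assume l: "l \<in> {1..<NN k}"
    have c1: "card (Pair (Lv l) ` {y. (Lv l, y) \<in> H}) \<le> card {y. (Lv l, y) \<in> H}"
      using fin by (rule card_image_le)
    have "Lv l \<in> Gverts a k" using l assms(1) by simp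
    hence "card {y. (Lv l, y) \<in> H} \<le> k" using od unfolding max_outdeg_le_def by blast
    thus "card (Pair (Lv l) ` {y. (Lv l, y) \<in> H}) \<le> k" using c1 by linarith
  qed
  also have "\<dots> = (NN k - 1) * k" by simp
  finally have "mval k \<le> (NN k - 1) * k" .
  moreover have "mval k = k * NN k" by (simp add: mval_def NN_def)
  moreover have "0 < NN k" by (rule NN_pos)
  moreover have "(NN k - 1) * k + k = k * NN k" using NN_pos[of k] by (cases "NN k") auto
  ultimately show False using assms(2) by linarith
qed

lemma NN_le:
  assumes "128 \<le> a" "0 < k" "real k \<le> ln (real a)"
  shows "NN k \<le> a"
proof (cases "k \<le> 6")
  case True
  have "NN k = 2 ^ (k+1)" by (simp add: NN_def)
  also have "\<dots> \<le> (2::nat) ^ 7" using True by (intro power_increasing) auto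
  finally show ?thesis using assms(1) by simp
next
  case False
  have apos: "0 < real a" using assms(1) by simp
  have e: "(1 + real k / real (2*k)) ^ (2*k) \<le> exp (real k)"
    by (rule exp_ge_one_plus_x_over_n_power_n) (use assms(2) in auto)
  have "1 + real k / real (2*k) = 3/2" using assms(2) by (simp add: field_simps)
  hence "(1 + real k / real (2*k)) ^ (2*k) = (9/4) ^ k"
    by (simp add: power_mult power2_eq_square)
  with e have e2: "(9/4::real) ^ k \<le> exp (real k)" by simp
  have "exp (real k) \<le> exp (ln (real a))" using assms(3) by simp
  also have "\<dots> = real a" using apos by simp
  finally have e3: "exp (real k) \<le> real a" .
  have "(2::real) \<le> (9/8) ^ 6" by (simp add: power_numeral_reduce)
  also have "\<dots> \<le> (9/8) ^ k" using False by (intro power_increasing) auto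
  finally have "2 * 2 ^ k \<le> (9/8::real) ^ k * 2 ^ k" by simp
  also have "\<dots> = (9/4) ^ k" by (simp add: power_mult_distrib[symmetric])
  finally have "real (NN k) \<le> real a" using e2 e3 by (simp add: NN_def)
  thus ?thesis by simp
qed

theorem lemma18:
  shows "\<exists>a0::nat. \<forall>a k. a \<ge> a0 \<and> 0 < k \<and> real k \<le> ln (real a) \<longrightarrow>
    measure_pmf.prob (edge_dist a k)
      {E. (\<exists>p. frac_guidance (Gverts a k) (Gadj a k E) 2 p
               \<and> frac_max_outdeg_le (Gverts a k) (Gadj a k E) p 3)
        \<and> \<not> (\<exists>H. weak_guidance (Gverts a k) (Gadj a k E) 2 H
               \<and> max_outdeg_le (Gverts a k) H k)} > 0"
proof (intro exI[of _ 128] allI impI)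
  fix a k :: nat
  assume h: "128 \<le> a \<and> 0 < k \<and> real k \<le> ln (real a)"
  hence N: "NN k \<le> a" and k0: "0 < k" using NN_le by auto
  let ?S = "Pow (Lset a \<times> Rset a k)"
  have fS: "finite ?S" by (simp add: Lset_def Rset_def)
  have inS: "E0 k \<in> ?S" using N by (auto simp: E0_def Lset_def Rset_def)
  hence "?S \<noteq> {}" by auto
  hence sp: "set_pmf (edge_dist a k) = ?S" unfolding edge_dist_def using fS by simp
  show "measure_pmf.prob (edge_dist a k)
      {E. (\<exists>p. frac_guidance (Gverts a k) (Gadj a k E) 2 p
               \<and> frac_max_outdeg_le (Gverts a k) (Gadj a k E) p 3)
        \<and> \<not> (\<exists>H. weak_guidance (Gverts a k) (Gadj a k E) 2 H
               \<and> max_outdeg_le (Gverts a k) H k)} > 0"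
  proof (rule measure_pmf_posI)
    show "E0 k \<in> set_pmf (edge_dist a k)" using sp inS by simp
    show "E0 k \<in> {E. (\<exists>p. frac_guidance (Gverts a k) (Gadj a k E) 2 p
               \<and> frac_max_outdeg_le (Gverts a k) (Gadj a k E) p 3)
        \<and> \<not> (\<exists>H. weak_guidance (Gverts a k) (Gadj a k E) 2 H
               \<and> max_outdeg_le (Gverts a k) H k)}"
      using part_i[OF N k0] part_ii[OF N k0] by blast
  qed
qed

end
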